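(* Let $(\mathbb{Z},H^+)$ be a simple component and let $N_H$ be the unique element of $H^+$ with $N_H-1\notin H^+$ and $N_H+k\in H^+$ for all $k\in\mathbb{Z}^+$. Let $a\in\mathbb{N}$, and let $p,c,d\in\mathbb{N}$ satisfy $\gcd(a,p)=\gcd(a,c)=\gcd(c,d)=1$, $pc\equiv pd\equiv1\pmod a$, $p\in H^+$, $pc>aN_H$ and $d>\max\{(a-1)pc+a(N_H-1),\ ac\}$. Let $G^+=aH^++p\langle c,d\rangle=\{ah+pz: h\in H^+, z\in\langle c,d\rangle\}$. Then for every integer $i$ with $0\le i\le a-1$ and every $x\in\mathbb{Z}\setminus H^+$ we have $ipc+ax\notin G^+$. In particular, setting $l_i=ipc+a(N_H-1)$ for $0\le i\le a-1$, the set $L_H=\{l_0,\dots,l_{a-1}\}$ satisfies $L_H\cap G^+=\emptyset$. Moreover, for each $0\le i\le a-1$, every integer congruent to $i$ modulo $a$ and greater than $l_i$ belongs to $G^+$.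
   Context: A simple component is a simple partially ordered abelian group of the form $(\mathbb{Z},P)$ (simple: every nonzero element $u$ of $P$ is an order-unit, i.e. for all $x$ there is $n$ with $nu\pm x\in P$); its cone $P$ is a submonoid of $\mathbb{Z}^+$ containing all sufficiently large integers. $\langle c,d\rangle$ is the submonoid of $\mathbb{Z}^+$ generated by $c$ and $d$. *)

theory Defs
  imports Main
begin

definition is_order_unit :: "int set \<Rightarrow> int \<Rightarrow> bool" where
  "is_order_unit P u \<longleftrightarrow> (\<forall>x. \<exists>n::nat. int n * u + x \<in> P \<and> int n * u - x \<in> P)"

definition simple_component :: "int set \<Rightarrow> bool" where
  "simple_component P \<longleftrightarrow>
     0 \<in> P \<and> (\<forall>x\<in>P. \<forall>y\<in>P. x + y \<in> P) \<and> P \<subseteq> {0..} \<and>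
     (\<exists>M. \<forall>n\<ge>M. n \<in> P) \<and> (\<forall>u\<in>P. u \<noteq> 0 \<longrightarrow> is_order_unit P u)"

definition gen2 :: "int \<Rightarrow> int \<Rightarrow> int set" where
  "gen2 c d = {int m * c + int n * d | m n. True}"

end

theory Submission
  imports Defs
begin

lemma sc_mult:
  assumes "simple_component H" "q \<in> H"
  shows "int k * q \<in> H"
proof (induction k)
  case 0
  then show ?case using assms by (simp add: simple_component_def)
next
  case (Suc k)
  have "int (Suc k) * q = int k * q + q" by (simp add: algebra_simps)
  then show ?case using Suc assms by (simp add: simple_component_def)
qed

theorem proposition4p3:
  fixes H :: "int set" and N :: int and a p c d :: nat and G :: "int set"
  assumes simple: "simple_component H"
    and NH: "N \<in> H" "N - 1 \<notin> H" "\<forall>k::int. k \<ge> 0 \<longrightarrow> N + k \<in> H"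
    and gcds: "gcd a p = 1" "gcd a c = 1" "gcd c d = 1"
    and cong: "(p * c) mod a = 1 mod a" "(p * d) mod a = 1 mod a"
    and pH: "int p \<in> H"
    and pc: "int (p * c) > int a * N"
    and dbig: "int d > max ((int a - 1) * int (p * c) + int a * (N - 1)) (int (a * c))"
    and G_def: "G = {int a * h + int p * z | h z. h \<in> H \<and> z \<in> gen2 (int c) (int d)}"
  shows "(\<forall>i::nat. \<forall>x::int. i < a \<and> x \<notin> H \<longrightarrow>
            int (i * p * c) + int a * x \<notin> G)
     \<and> {int (i * p * c) + int a * (N - 1) | i. i < a} \<inter> G = {}
     \<and> (\<forall>i::nat. i < a \<longrightarrow> (\<forall>n::int. n mod int a = int i \<and>
            n > int (i * p * c) + int a * (N - 1) \<longrightarrow> n \<in> G))"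
proof -
  have Hnn: "\<And>h. h \<in> H \<Longrightarrow> h \<ge> 0" using simple by (auto simp: simple_component_def)
  have N0: "N \<ge> 0" using Hnn NH(1) .
  have pc_pos: "int p * int c > 0" using pc N0
    by (metis of_nat_0_le_iff of_nat_mult mult_nonneg_nonneg order_le_less_trans)
  have pcmod: "(int p * int c) mod int a = 1 mod int a"
    using cong(1) by (metis of_nat_mod of_nat_mult of_nat_1)
  have P1: "\<forall>i::nat. \<forall>x::int. i < a \<and> x \<notin> H \<longrightarrow> int (i * p * c) + int a * x \<notin> G"
  proof (intro allI impI notI)
    fix i :: nat and x :: int
    assume ix: "i < a \<and> x \<notin> H" and inG: "int (i * p * c) + int a * x \<in> G"
    from inG obtain h z where hH: "h \<in> H" and zg: "z \<in> gen2 (int c) (int d)"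
      and eq: "int (i * p * c) + int a * x = int a * h + int p * z" using G_def by auto
    from zg obtain m n :: nat where z: "z = int m * int c + int n * int d"
      unfolding gen2_def by auto
    have xle: "x \<le> N - 1"
    proof (rule ccontr)
      assume "\<not> x \<le> N - 1"
      then have "N + (x - N) \<in> H" using NH(3)[rule_format, of "x - N"] by simp
      then show False using ix by simp
    qed
    have h0: "h \<ge> 0" using Hnn hH .
    have p1: "int p \<ge> 1" using pc_pos by (cases p) auto
    have c0: "int c \<ge> 0" by simp
    have n0: "n = 0"
    proof (rule ccontr)
      assume "n \<noteq> 0"
      then have "int n * int d \<ge> int d" by (cases n) (auto simp: algebra_simps)
      moreover have "int m * int c \<ge> 0" by simp
      ultimately have "z \<ge> int d" using z by linarith
      moreover have "int p * z \<ge> 1 * z" using p1 \<open>z \<ge> int d\<close>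
        by (intro mult_right_mono) auto
      ultimately have "int p * z \<ge> int d" by linarith
      moreover have "int a * h \<ge> 0" using h0 by simp
      ultimately have r: "int a * h + int p * z \<ge> int d" by linarith
      have "int i \<le> int a - 1" using ix by simp
      then have "int i * (int p * int c) \<le> (int a - 1) * (int p * int c)"
        using pc_pos by (simp add: mult_right_mono)
      moreover have "int a * x \<le> int a * (N - 1)" using xle by (simp add: mult_left_mono)
      ultimately have "int (i * p * c) + int a * x \<le> (int a - 1) * int (p * c) + int a * (N - 1)"
        by (simp add: mult.assoc)
      then show False using r eq dbig by simp
    qed
    have eq2: "int a * (x - h) = (int m - int i) * (int p * int c)"
      using eq z n0 by (simp add: algebra_simps)
    have "((int m - int i) * (int p * int c)) mod int a = 0"
      unfolding eq2[symmetric] by simp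
    moreover have "((int m - int i) * (int p * int c)) mod int a = (int m - int i) mod int a"
      by (metis mod_mult_right_eq pcmod mult.right_neutral)
    ultimately have "int a dvd (int m - int i)" by (simp add: dvd_eq_mod_eq_0)
    then obtain k where k: "int m - int i = int a * k" by auto
    have apos: "int a > 0" using ix by simp
    have "k \<ge> 0"
    proof (rule ccontr)
      assume "\<not> k \<ge> 0"
      then have "k \<le> -1" by simp
      then have "int a * k \<le> int a * (-1)" using apos by (intro mult_left_mono) auto
      then have "int a * k \<le> - int a" by simp
      then show False using k ix by simp
    qed
    have "int a * (x - h) = int a * (k * (int p * int c))" using eq2 k by simp
    then have "x - h = k * (int p * int c)" using apos by simp
    then have xeq: "x = h + int (nat k * c) * int p" using \<open>k \<ge> 0\<close> by (simp add: algebra_simps)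
    have "int (nat k * c) * int p \<in> H" using sc_mult simple pH by blast
    then have "x \<in> H" using xeq hH simple by (simp add: simple_component_def)
    then show False using ix by simp
  qed
  have P2: "{int (i * p * c) + int a * (N - 1) | i. i < a} \<inter> G = {}"
    using P1 NH(2) by blast
  have P3: "\<forall>i::nat. i < a \<longrightarrow> (\<forall>n::int. n mod int a = int i \<and>
            n > int (i * p * c) + int a * (N - 1) \<longrightarrow> n \<in> G)"
  proof (intro allI impI)
    fix i :: nat and n :: int
    assume ia: "i < a" and nn: "n mod int a = int i \<and> n > int (i * p * c) + int a * (N - 1)"
    have apos: "int a > 0" using ia by simp
    have "(int i * (int p * int c)) mod int a = (int i * 1) mod int a"
      by (metis mod_mult_right_eq pcmod)
    also have "\<dots> = int i" using ia by simp
    finally have m1: "int (i * p * c) mod int a = int i" by (simp add: mult.assoc)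
    have "(n - int (i * p * c)) mod int a = 0" using m1 nn by (simp add: mod_diff_eq[symmetric])
    then obtain y where y: "n - int (i * p * c) = int a * y" by auto
    have "int a * y > int a * (N - 1)" using y nn by simp
    then have "y > N - 1" using apos by (simp add: mult_less_cancel_left)
    then have yH: "y \<in> H" using NH(3)[rule_format, of "y - N"] by simp
    have zg: "int (i * c) \<in> gen2 (int c) (int d)" unfolding gen2_def
      by (rule CollectI, rule exI[of _ "i"], rule exI[of _ 0]) simp
    have "n = int a * y + int p * int (i * c)" using y by (simp add: algebra_simps)
    then show "n \<in> G" using G_def yH zg by blast
  qed
  show ?thesis using P1 P2 P3 by blast
qed

end
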